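(* Consider Algorithm ProxSAGA (described in the context) with $b=1$, $\eta=1/(5Ln)$, run for $T\ge1$ iterations. Then the output $x_a$ satisfies $$\mathbb E\big[\|\mathcal G_\eta(x_a)\|^2\big]\le \frac{50Ln^2}{5n-2}\cdot\frac{F(x^0)-F(x^* )}{T},$$ where $x^*$ is an optimal solution of $\min_x F(x)$.
   Context: Setting: Let $n,d\ge 1$ be integers and $[n]=\{1,\dots,n\}$. Let $f_1,\dots,f_n:\mathbb R^d\to\mathbb R$ be differentiable (possibly nonconvex) functions, each $L$-smooth for some $L>0$, i.e. $\|\nabla f_i(x)-\nabla f_i(y)\|\le L\|x-y\|$ for all $x,y\in\mathbb R^d$ and $i\in[n]$. Let $f=\frac1n\sum_{i=1}^n f_i$. Let $h:\mathbb R^d\to\mathbb R\cup\{+\infty\}$ be proper, lower semicontinuous and convex, with closed domain. Let $F=f+h$, and let $x^*$ be a global minimizer of $F$ on $\mathbb R^d$ (assumed to exist). For $\eta>0$, $\mathrm{prox}_{\eta h}(x):=\arg\min_{y\in\mathbb R^d}\big(h(y)+\frac1{2\eta}\|y-x\|^2\big)$, and the gradient mapping is $\mathcal G_\eta(x):=\frac1\eta\big[x-\mathrm{prox}_{\eta h}(x-\eta\nabla f(x))\big]$. Algorithm ProxSAGA$(x^0,T,b,\eta)$: Given $x^0\in\mathbb R^d$, positive integers $T,b$ and $\eta>0$, set $\alpha^0_i=x^0$ for all $i\in[n]$. For $t=0,1,\dots$ let $g^t=\frac1n\sum_{i=1}^n\nabla f_i(\alpha^t_i)$. For $t=0,\dots,T-1$: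 draw two multisets $I_t,J_t$, each consisting of $b$ indices drawn independently and uniformly at random from $[n]$ (with replacement; $I_t$, $J_t$ independent of each other and of all previous draws); set $v^t=\frac1b\sum_{i\in I_t}\big(\nabla f_i(x^t)-\nabla f_i(\alpha^t_i)\big)+g^t$ and $x^{t+1}=\mathrm{prox}_{\eta h}(x^t-\eta v^t)$; set $\alpha^{t+1}_j=x^t$ for $j\in J_t$ and $\alpha^{t+1}_j=\alpha^t_j$ for $j\notin J_t$. The output $x_a$ is chosen uniformly at random from $\{x^0,\dots,x^{T-1}\}$. Expectations are over all randomness of the algorithm. *)

theory Defs
  imports "HOL-Analysis.Analysis" "HOL-Probability.Probability"
begin

text \<open>The extended-valued function h : R^d -> R u {+oo} is represented by its
  effective domain C (= dom h) together with the real-valued function h on C;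
  outside C the value of h is +oo (the real values of h outside C are irrelevant).\<close>

definition lsc_ext :: "'a::topological_space set \<Rightarrow> ('a \<Rightarrow> real) \<Rightarrow> bool" where
  "lsc_ext C h \<longleftrightarrow> (\<forall>a::real. closed {x \<in> C. h x \<le> a})"

definition prox :: "'a::real_normed_vector set \<Rightarrow> ('a \<Rightarrow> real) \<Rightarrow> real \<Rightarrow> 'a \<Rightarrow> 'a" where
  "prox C h \<eta> x = (THE y. y \<in> C \<and>
      (\<forall>z\<in>C. h y + (1 / (2 * \<eta>)) * (norm (y - x))\<^sup>2 \<le> h z + (1 / (2 * \<eta>)) * (norm (z - x))\<^sup>2))"

definition full_grad :: "nat \<Rightarrow> (nat \<Rightarrow> 'a \<Rightarrow> 'a::real_vector) \<Rightarrow> 'a \<Rightarrow> 'a" where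
  "full_grad n gf x = (1 / real n) *\<^sub>R (\<Sum>i<n. gf i x)"

definition grad_map :: "nat \<Rightarrow> (nat \<Rightarrow> 'a \<Rightarrow> 'a) \<Rightarrow> 'a::real_normed_vector set \<Rightarrow> ('a \<Rightarrow> real)
    \<Rightarrow> real \<Rightarrow> 'a \<Rightarrow> 'a" where
  "grad_map n gf C h \<eta> x = (1 / \<eta>) *\<^sub>R (x - prox C h \<eta> (x - \<eta> *\<^sub>R full_grad n gf x))"

text \<open>State of ProxSAGA after t iterations: (x^t, alpha^t), given the random draws.
  ds t = (I_t, J_t), each a function {0..<b} -> {0..<n} listing the b indices of the
  multiset.\<close>
fun saga_state :: "nat \<Rightarrow> (nat \<Rightarrow> 'a \<Rightarrow> 'a) \<Rightarrow> 'a::real_normed_vector set \<Rightarrow> ('a \<Rightarrow> real)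
    \<Rightarrow> real \<Rightarrow> nat \<Rightarrow> 'a \<Rightarrow> (nat \<Rightarrow> (nat \<Rightarrow> nat) \<times> (nat \<Rightarrow> nat)) \<Rightarrow> nat \<Rightarrow> 'a \<times> (nat \<Rightarrow> 'a)" where
  "saga_state n gf C h \<eta> b x0 ds 0 = (x0, (\<lambda>_. x0))"
| "saga_state n gf C h \<eta> b x0 ds (Suc t) =
     (let (x, \<alpha>) = saga_state n gf C h \<eta> b x0 ds t;
          (I, J) = ds t;
          g = (1 / real n) *\<^sub>R (\<Sum>i<n. gf i (\<alpha> i));
          v = (1 / real b) *\<^sub>R (\<Sum>k<b. gf (I k) x - gf (I k) (\<alpha> (I k))) + g
      in (prox C h \<eta> (x - \<eta> *\<^sub>R v), (\<lambda>j. if j \<in> J ` {..<b} then x else \<alpha> j)))"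

definition saga_draws :: "nat \<Rightarrow> nat \<Rightarrow> nat \<Rightarrow> (nat \<Rightarrow> (nat \<Rightarrow> nat) \<times> (nat \<Rightarrow> nat)) pmf" where
  "saga_draws n b T = Pi_pmf {..<T} (\<lambda>_. 0, \<lambda>_. 0)
     (\<lambda>_. pair_pmf (Pi_pmf {..<b} 0 (\<lambda>_. pmf_of_set {..<n}))
                   (Pi_pmf {..<b} 0 (\<lambda>_. pmf_of_set {..<n})))"

text \<open>E[ ||G_eta(x_a)||^2 ] where x_a is uniform on {x^0,...,x^{T-1}}, independent of the draws.\<close>
definition saga_expected_gm :: "nat \<Rightarrow> (nat \<Rightarrow> 'a \<Rightarrow> 'a) \<Rightarrow> 'a::real_normed_vector set \<Rightarrow> ('a \<Rightarrow> real)
    \<Rightarrow> 'a \<Rightarrow> nat \<Rightarrow> nat \<Rightarrow> real \<Rightarrow> real" where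
  "saga_expected_gm n gf C h x0 T b \<eta> =
     measure_pmf.expectation (pair_pmf (saga_draws n b T) (pmf_of_set {..<T}))
       (\<lambda>(ds, a). (norm (grad_map n gf C h \<eta> (fst (saga_state n gf C h \<eta> b x0 ds a))))\<^sup>2)"

end

theory Submission
  imports Defs
begin


lemma quad_upper_aux:
  fixes \<phi> :: "'a::real_inner \<Rightarrow> real"
  assumes der: "\<And>x. (\<phi> has_derivative (\<lambda>v. \<gamma> x \<bullet> v)) (at x)"
    and lip: "\<And>x y. norm (\<gamma> x - \<gamma> y) \<le> L * norm (x - y)"
  shows "\<phi> y - \<phi> x - \<gamma> x \<bullet> (y - x) \<le> L/2 * (norm (y - x))\<^sup>2
       \<and> -(\<phi> y - \<phi> x - \<gamma> x \<bullet> (y - x)) \<le> L/2 * (norm (y - x))\<^sup>2"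
proof -
  define d where "d = y - x"
  have dd: "\<And>t. ((\<lambda>t. \<phi> (x + t *\<^sub>R d)) has_real_derivative (\<gamma> (x + t *\<^sub>R d) \<bullet> d)) (at t)"
  proof -
    fix t
    have "((\<lambda>t. x + t *\<^sub>R d) has_derivative (\<lambda>s. s *\<^sub>R d)) (at t)"
      by (auto intro!: derivative_eq_intros)
    from has_derivative_compose[OF this der]
    have "((\<lambda>t. \<phi> (x + t *\<^sub>R d)) has_derivative (\<lambda>s. \<gamma> (x + t *\<^sub>R d) \<bullet> (s *\<^sub>R d))) (at t)" .
    moreover have "(\<lambda>s. \<gamma> (x + t *\<^sub>R d) \<bullet> (s *\<^sub>R d)) = (*) (\<gamma> (x + t *\<^sub>R d) \<bullet> d)"
      by (auto simp: fun_eq_iff)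
    ultimately show "((\<lambda>t. \<phi> (x + t *\<^sub>R d)) has_real_derivative (\<gamma> (x + t *\<^sub>R d) \<bullet> d)) (at t)"
      by (simp add: has_field_derivative_def)
  qed
  have bnd: "\<bar>(\<gamma> (x + t *\<^sub>R d) - \<gamma> x) \<bullet> d\<bar> \<le> L * t * (norm d)\<^sup>2" if "0 \<le> t" for t
  proof -
    have "\<bar>(\<gamma> (x + t *\<^sub>R d) - \<gamma> x) \<bullet> d\<bar> \<le> norm (\<gamma> (x + t *\<^sub>R d) - \<gamma> x) * norm d"
      by (rule Cauchy_Schwarz_ineq2)
    also have "\<dots> \<le> (L * norm (t *\<^sub>R d)) * norm d"
      using lip[of "x + t *\<^sub>R d" x] by (intro mult_right_mono) auto
    also have "\<dots> = L * t * (norm d)\<^sup>2" using that by (simp add: power2_eq_square)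
    finally show ?thesis .
  qed
  define k1 where "k1 t = \<phi> (x + t *\<^sub>R d) - t * (\<gamma> x \<bullet> d) - t\<^sup>2 * (L/2 * (norm d)\<^sup>2)" for t
  define k2 where "k2 t = \<phi> (x + t *\<^sub>R d) - t * (\<gamma> x \<bullet> d) + t\<^sup>2 * (L/2 * (norm d)\<^sup>2)" for t
  have "k1 1 \<le> k1 0"
  proof (rule DERIV_nonpos_imp_nonincreasing[of 0 1 k1])
    fix t :: real assume t: "0 \<le> t" "t \<le> 1"
    have "(k1 has_real_derivative (\<gamma> (x + t *\<^sub>R d) \<bullet> d - \<gamma> x \<bullet> d - 2 * t * (L/2 * (norm d)\<^sup>2))) (at t)"
      unfolding k1_def by (auto intro!: derivative_eq_intros dd)
    moreover have "\<gamma> (x + t *\<^sub>R d) \<bullet> d - \<gamma> x \<bullet> d - 2 * t * (L/2 * (norm d)\<^sup>2) \<le> 0"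
      using bnd[OF t(1)] unfolding inner_diff_left abs_le_iff by (simp add: algebra_simps)
    ultimately show "\<exists>y. (k1 has_real_derivative y) (at t) \<and> y \<le> 0" by blast
  qed simp
  moreover have "k2 0 \<le> k2 1"
  proof (rule DERIV_nonneg_imp_nondecreasing[of 0 1 k2])
    fix t :: real assume t: "0 \<le> t" "t \<le> 1"
    have "(k2 has_real_derivative (\<gamma> (x + t *\<^sub>R d) \<bullet> d - \<gamma> x \<bullet> d + 2 * t * (L/2 * (norm d)\<^sup>2))) (at t)"
      unfolding k2_def by (auto intro!: derivative_eq_intros dd)
    moreover have "\<gamma> (x + t *\<^sub>R d) \<bullet> d - \<gamma> x \<bullet> d + 2 * t * (L/2 * (norm d)\<^sup>2) \<ge> 0"
      using bnd[OF t(1)] unfolding inner_diff_left abs_le_iff by (simp add: algebra_simps)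
    ultimately show "\<exists>y. (k2 has_real_derivative y) (at t) \<and> y \<ge> 0" by blast
  qed simp
  ultimately show ?thesis unfolding k1_def k2_def d_def by simp
qed



lemma closed_sublevel_plus:
  fixes C :: "'a::euclidean_space set"
  assumes "closed C" "lsc_ext C h" "continuous_on UNIV q"
  shows "closed {y\<in>C. h y + q y \<le> c}"
  unfolding closed_sequential_limits
proof (intro allI impI, elim conjE)
  fix ys l assume ys: "\<forall>n. ys n \<in> {y \<in> C. h y + q y \<le> c}" and lim: "ys \<longlonglongrightarrow> l"
  have ysC: "\<forall>k. ys k \<in> C" using ys by auto
  have lC: "l \<in> C"
    using closed_sequential_limits[THEN iffD1, OF assms(1)] ysC lim by blast
  have "isCont q l" using assms(3) continuous_on_eq_continuous_at[of UNIV q] by simp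
  hence qlim: "(\<lambda>k. q (ys k)) \<longlonglongrightarrow> q l"
    using lim by (rule isCont_tendsto_compose)
  have "h l \<le> (c - q l) + e" if e: "e > 0" for e
  proof -
    have ev: "eventually (\<lambda>k. q (ys k) > q l - e) sequentially"
      using order_tendstoD(1)[OF qlim, of "q l - e"] e by simp
    have evC: "eventually (\<lambda>k. ys k \<in> {y\<in>C. h y \<le> c - q l + e}) sequentially"
      using ev
    proof (rule eventually_mono)
      fix k assume "q l - e < q (ys k)"
      moreover have "ys k \<in> C" "h (ys k) + q (ys k) \<le> c" using ys by auto
      ultimately show "ys k \<in> {y\<in>C. h y \<le> c - q l + e}" by auto
    qed
    have cl: "closed {y\<in>C. h y \<le> c - q l + e}"
      using assms(2) unfolding lsc_ext_def by simp
    have "l \<in> {y\<in>C. h y \<le> c - q l + e}"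
      by (rule Lim_in_closed_set[OF cl evC sequentially_bot lim])
    thus ?thesis by simp
  qed
  hence "h l \<le> c - q l" by (rule field_le_epsilon)
  thus "l \<in> {y \<in> C. h y + q y \<le> c}" using lC by simp
qed

lemma eps_lemma:
  fixes X c :: real
  assumes "\<And>t. 0 < t \<Longrightarrow> t < 1 \<Longrightarrow> X \<le> t * c" "c \<ge> 0"
  shows "X \<le> 0"
proof (rule ccontr)
  assume "\<not> X \<le> 0" hence X: "X > 0" by simp
  have "X \<le> (1/2) * c" using assms(1)[of "1/2"] by simp
  hence c: "c > 0" using X by simp
  define t where "t = min (1/2) (X / (2*c))"
  have t: "0 < t" "t < 1" using X c by (auto simp: t_def)
  have "t * c \<le> X/(2*c) * c" using c by (intro mult_right_mono) (auto simp: t_def)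
  also have "\<dots> = X/2" using c by simp
  finally show False using assms(1)[OF t] X by simp
qed

lemma norm_convex_identity:
  fixes y z w :: "'a::real_inner"
  shows "(norm ((1 - t) *\<^sub>R y + t *\<^sub>R z - w))\<^sup>2 =
     (1 - t) * (norm (y - w))\<^sup>2 + t * (norm (z - w))\<^sup>2 - t * (1 - t) * (norm (y - z))\<^sup>2"
proof -
  define A where "A = y - w"
  define B where "B = z - w"
  have e: "(1 - t) *\<^sub>R y + t *\<^sub>R z - w = (1 - t) *\<^sub>R A + t *\<^sub>R B"
    by (simp add: A_def B_def algebra_simps)
  have e2: "y - z = A - B" by (simp add: A_def B_def)
  have n1: "(norm ((1 - t) *\<^sub>R A + t *\<^sub>R B))\<^sup>2 = (1-t)*(1-t)*(A \<bullet> A) + 2*t*(1-t)*(A \<bullet> B) + t*t*(B \<bullet> B)"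
    unfolding power2_norm_eq_inner inner_add_left inner_add_right inner_scaleR_left inner_scaleR_right
    by (simp add: inner_commute[of B A]; simp add: algebra_simps)
  have n2: "(norm (A - B))\<^sup>2 = A \<bullet> A - 2*(A \<bullet> B) + B \<bullet> B"
    unfolding power2_norm_eq_inner inner_diff_left inner_diff_right
    by (simp add: inner_commute[of B A]; simp add: algebra_simps)
  have n3: "(norm (y - w))\<^sup>2 = A \<bullet> A" by (simp add: A_def power2_norm_eq_inner)
  have n4: "(norm (z - w))\<^sup>2 = B \<bullet> B" by (simp add: B_def power2_norm_eq_inner)
  show ?thesis unfolding e e2 n1 n2 n3 n4 by algebra
qed
lemma sq2: fixes x p :: real shows "(x + p)\<^sup>2 \<le> 2 * x\<^sup>2 + 2 * p\<^sup>2"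
proof -
  have "0 \<le> (x - p)\<^sup>2" by simp
  thus ?thesis unfolding power2_diff power2_sum by linarith
qed

lemma prox_main:
  fixes C :: "'a::euclidean_space set" and h :: "'a \<Rightarrow> real"
  assumes C: "closed C" "convex C" "C \<noteq> {}" and hc: "convex_on C h" and hl: "lsc_ext C h"
    and eta: "\<eta> > 0"
    and low: "\<And>y. y \<in> C \<Longrightarrow> h y \<ge> a0 - B * norm (y - c0) - (K/2) * (norm (y - c0))\<^sup>2"
    and K: "K < 1 / (2 * \<eta>)" and B: "B \<ge> 0"
  shows "prox C h \<eta> w \<in> C \<and> (\<forall>z\<in>C. h (prox C h \<eta> w) + (1/(2*\<eta>)) * (norm (prox C h \<eta> w - w))\<^sup>2
            + (1/(2*\<eta>)) * (norm (prox C h \<eta> w - z))\<^sup>2 \<le> h z + (1/(2*\<eta>)) * (norm (z - w))\<^sup>2)"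
proof -
  define a where "a = 1 / (2 * \<eta>)"
  have a: "a > 0" using eta by (simp add: a_def)
  define \<psi> where "\<psi> y = h y + a * (norm (y - w))\<^sup>2" for y
  define p where "p = norm (w - c0)"
  define \<kappa> where "\<kappa> = (a - K) / 2"
  have kap: "\<kappa> > 0" using K by (simp add: \<kappa>_def a_def)
  define c1 where "c1 = a0 - a * p\<^sup>2"
  have lowpsi: "\<psi> y \<ge> c1 - B * norm (y - c0) + \<kappa> * (norm (y - c0))\<^sup>2" if "y \<in> C" for y
  proof -
    define r where "r = norm (y - c0)"
    have "y - c0 = (y - w) + (w - c0)" by simp
    hence "r \<le> norm (y - w) + p" unfolding r_def p_def using norm_triangle_ineq[of "y - w" "w - c0"] by simp
    hence "r\<^sup>2 \<le> (norm (y - w) + p)\<^sup>2" by (rule power_mono) (simp add: r_def)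
    also have "\<dots> \<le> 2 * (norm (y - w))\<^sup>2 + 2 * p\<^sup>2" by (rule sq2)
    finally have "a * r\<^sup>2 \<le> a * (2 * (norm (y - w))\<^sup>2 + 2 * p\<^sup>2)" using a by simp
    hence "a * (norm (y - w))\<^sup>2 \<ge> a / 2 * r\<^sup>2 - a * p\<^sup>2" by (simp add: distrib_left)
    moreover have "h y \<ge> a0 - B * r - (K/2) * r\<^sup>2" using low[OF that] by (simp add: r_def)
    moreover have "\<kappa> * r\<^sup>2 = a/2 * r\<^sup>2 - K/2 * r\<^sup>2" unfolding \<kappa>_def by (simp add: field_simps)
    ultimately show ?thesis unfolding \<psi>_def c1_def r_def[symmetric] by linarith
  qed
  define mlow where "mlow = c1 - B\<^sup>2 / (4 * \<kappa>)"
  have quad: "- B * r + \<kappa> * r\<^sup>2 \<ge> - B\<^sup>2 / (4 * \<kappa>)" for r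
  proof -
    have "0 \<le> (2 * \<kappa> * r - B)\<^sup>2" by simp
    hence "0 \<le> 4 * \<kappa> * (- B * r + \<kappa> * r\<^sup>2) + B\<^sup>2" by (simp add: power2_eq_square algebra_simps)
    hence "(- B\<^sup>2) / (4 * \<kappa>) \<le> (4 * \<kappa> * (- B * r + \<kappa> * r\<^sup>2)) / (4 * \<kappa>)"
      using kap by (intro divide_right_mono) auto
    thus ?thesis using kap by simp
  qed
  have bdd: "\<psi> y \<ge> mlow" if "y \<in> C" for y
    using lowpsi[OF that] quad[of "norm (y - c0)"] by (simp add: mlow_def)
  have bdd_img: "bdd_below (\<psi> ` C)" using bdd by (auto intro!: bdd_belowI2)
  define m where "m = Inf (\<psi> ` C)"
  have mle: "m \<le> \<psi> z" if "z \<in> C" for z using cInf_lower[OF _ bdd_img] that by (simp add: m_def)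
  define F where "F k = {y\<in>C. h y + a * (norm (y - w))\<^sup>2 \<le> m + 1 / real (Suc k)}" for k
  have cont: "continuous_on UNIV (\<lambda>y. a * (norm (y - w))\<^sup>2)" by (intro continuous_intros)
  have Fclosed: "closed (F k)" for k unfolding F_def
    by (rule closed_sublevel_plus[OF C(1) hl cont])
  have Fbounded: "bounded (F k)" for k
  proof -
    define M where "M = m + 1 / real (Suc k)"
    define R where "R = max 1 ((\<bar>M - c1\<bar> + B) / \<kappa>)"
    have "F k \<subseteq> cball c0 R"
    proof
      fix y assume y: "y \<in> F k"
      hence yC: "y \<in> C" and py: "\<psi> y \<le> M" by (auto simp: F_def \<psi>_def M_def)
      define r where "r = norm (y - c0)"
      have r0: "r \<ge> 0" by (simp add: r_def)
      have "\<kappa> * r\<^sup>2 \<le> M - c1 + B * r" using lowpsi[OF yC] py by (simp add: r_def)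
      show "y \<in> cball c0 R"
      proof (cases "r \<le> 1")
        case True thus ?thesis by (simp add: R_def dist_norm r_def norm_minus_commute)
      next
        case False
        have "M - c1 \<le> \<bar>M - c1\<bar> * 1" by simp
        also have "\<dots> \<le> \<bar>M - c1\<bar> * r" using False by (intro mult_left_mono) auto
        finally have "\<kappa> * r * r \<le> (\<bar>M - c1\<bar> + B) * r"
          using \<open>\<kappa> * r\<^sup>2 \<le> M - c1 + B * r\<close> by (simp add: power2_eq_square distrib_right)
        hence "\<kappa> * r \<le> \<bar>M - c1\<bar> + B" using False by simp
        hence "r \<le> (\<bar>M - c1\<bar> + B) / \<kappa>" using kap by (simp add: field_simps)
        thus ?thesis by (simp add: R_def dist_norm r_def norm_minus_commute)
      qed
    qed
    thus ?thesis using bounded_cball bounded_subset by blast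
  qed
  have Fne: "F k \<noteq> {}" for k
  proof -
    have "\<exists>y\<in>\<psi> ` C. y < m + 1 / real (Suc k)"
      using cInf_less_iff[OF _ bdd_img, of "m + 1 / real (Suc k)"] C(3) by (simp add: m_def)
    thus ?thesis by (auto simp: F_def \<psi>_def)
  qed
  have Fmono: "F j \<subseteq> F i" if "i \<le> j" for i j
  proof -
    have "1 / real (Suc j) \<le> 1 / real (Suc i)" using that by (simp add: frac_le)
    thus ?thesis by (auto simp: F_def)
  qed
  have "\<Inter>(range F) \<noteq> {}"
  proof (rule compact_nest[of F])
    show "compact (F n)" for n using Fclosed Fbounded compact_eq_bounded_closed by blast
    show "F n \<noteq> {}" for n by (rule Fne)
    show "F n \<subseteq> F m" if "m \<le> n" for m n using Fmono that by blast
  qed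
  then obtain y where y: "y \<in> \<Inter>(range F)" by blast
  have yC: "y \<in> C" using y by (auto simp: F_def)
  have "\<psi> y \<le> m"
  proof (rule ccontr)
    assume "\<not> \<psi> y \<le> m"
    hence "\<psi> y - m > 0" by simp
    then obtain k where "inverse (real (Suc k)) < \<psi> y - m" using reals_Archimedean by blast
    moreover have "\<psi> y \<le> m + 1 / real (Suc k)" using y by (auto simp: F_def \<psi>_def)
    ultimately show False by (simp add: field_simps)
  qed
  hence ymin: "\<psi> y \<le> \<psi> z" if "z \<in> C" for z using mle[OF that] by simp
  have three: "\<psi> y + a * (norm (y - z))\<^sup>2 \<le> \<psi> z" if zC: "z \<in> C" for z
  proof -
    have "\<psi> y + a * (norm (y - z))\<^sup>2 - \<psi> z \<le> t * (a * (norm (y - z))\<^sup>2)" if t: "0 < t" "t < 1" for t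
    proof -
      define u where "u = (1 - t) *\<^sub>R y + t *\<^sub>R z"
      have uC: "u \<in> C" using C(2) yC zC t unfolding u_def by (simp add: convex_def)
      have hu: "h u \<le> (1 - t) * h y + t * h z"
        using convex_onD[OF hc, of t y z] yC zC t unfolding u_def by simp
      have nu: "(norm (u - w))\<^sup>2 = (1 - t) * (norm (y - w))\<^sup>2 + t * (norm (z - w))\<^sup>2 - t * (1 - t) * (norm (y - z))\<^sup>2"
        unfolding u_def by (rule norm_convex_identity)
      have "\<psi> y \<le> \<psi> u" by (rule ymin[OF uC])
      also have "\<dots> \<le> (1 - t) * \<psi> y + t * \<psi> z - a * t * (1 - t) * (norm (y - z))\<^sup>2"
      proof -
        have eq: "a * ((1 - t) * (norm (y - w))\<^sup>2 + t * (norm (z - w))\<^sup>2 - t * (1 - t) * (norm (y - z))\<^sup>2)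
          = (1 - t) * (a * (norm (y - w))\<^sup>2) + t * (a * (norm (z - w))\<^sup>2) - a * t * (1 - t) * (norm (y - z))\<^sup>2"
          by (simp add: algebra_simps)
        have eq2: "(1 - t) * \<psi> y + t * \<psi> z = (1 - t) * h y + t * h z + ((1 - t) * (a * (norm (y - w))\<^sup>2) + t * (a * (norm (z - w))\<^sup>2))"
          unfolding \<psi>_def by (simp add: algebra_simps)
        show ?thesis unfolding eq2 unfolding \<psi>_def nu eq using hu by linarith
      qed
      finally have "t * \<psi> y \<le> t * (\<psi> z - a * (1 - t) * (norm (y - z))\<^sup>2)" by (simp add: algebra_simps)
      hence "\<psi> y \<le> \<psi> z - a * (1 - t) * (norm (y - z))\<^sup>2" by (rule mult_left_le_imp_le) (use t in auto)
      thus ?thesis by (simp add: algebra_simps)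
    qed
    hence "\<psi> y + a * (norm (y - z))\<^sup>2 - \<psi> z \<le> 0" by (rule eps_lemma) (use a in auto)
    thus ?thesis by simp
  qed
  have P: "prox C h \<eta> w = y"
    unfolding prox_def
  proof (rule the_equality)
    show "y \<in> C \<and> (\<forall>z\<in>C. h y + 1 / (2 * \<eta>) * (norm (y - w))\<^sup>2 \<le> h z + 1 / (2 * \<eta>) * (norm (z - w))\<^sup>2)"
      using yC ymin by (simp add: \<psi>_def a_def)
  next
    fix y' assume y': "y' \<in> C \<and> (\<forall>z\<in>C. h y' + 1 / (2 * \<eta>) * (norm (y' - w))\<^sup>2 \<le> h z + 1 / (2 * \<eta>) * (norm (z - w))\<^sup>2)"
    hence "\<psi> y' \<le> \<psi> y" using yC by (simp add: \<psi>_def a_def)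
    moreover have "\<psi> y + a * (norm (y - y'))\<^sup>2 \<le> \<psi> y'" using three y' by blast
    ultimately have "a * (norm (y - y'))\<^sup>2 \<le> 0" by simp
    hence "norm (y - y') = 0" using a by (simp add: mult_le_0_iff)
    thus "y' = y" by simp
  qed
  show ?thesis unfolding P
  proof (intro conjI ballI)
    show "y \<in> C" by (rule yC)
    fix z assume "z \<in> C"
    from three[OF this] show "h y + 1 / (2 * \<eta>) * (norm (y - w))\<^sup>2 + 1 / (2 * \<eta>) * (norm (y - z))\<^sup>2
         \<le> h z + 1 / (2 * \<eta>) * (norm (z - w))\<^sup>2" unfolding \<psi>_def a_def by simp
  qed
qed



lemma norm_add_sq: "(norm (u + v))\<^sup>2 = (norm u)\<^sup>2 + 2 * (u \<bullet> v) + (norm (v::'a::real_inner))\<^sup>2"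
  unfolding power2_norm_eq_inner by (simp add: inner_add_left inner_add_right inner_commute[of v u])

lemma young_inner:
  fixes u e :: "'a::real_inner"
  assumes "\<eta> > 0"
  shows "u \<bullet> e \<le> 1 / (2 * \<eta>) * (norm u)\<^sup>2 + \<eta> / 2 * (norm e)\<^sup>2"
proof -
  have "0 \<le> (norm (u - \<eta> *\<^sub>R e))\<^sup>2" by simp
  also have "\<dots> = (norm u)\<^sup>2 - 2 * \<eta> * (u \<bullet> e) + \<eta>\<^sup>2 * (norm e)\<^sup>2"
    using norm_add_sq[of u "- (\<eta> *\<^sub>R e)"] by (simp add: power_mult_distrib)
  finally have "2 * \<eta> * (u \<bullet> e) \<le> (norm u)\<^sup>2 + \<eta>\<^sup>2 * (norm e)\<^sup>2" by simp
  hence "(2 * \<eta> * (u \<bullet> e)) / (2 * \<eta>) \<le> ((norm u)\<^sup>2 + \<eta>\<^sup>2 * (norm e)\<^sup>2) / (2 * \<eta>)"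
    using assms by (intro divide_right_mono) auto
  also have "((norm u)\<^sup>2 + \<eta>\<^sup>2 * (norm e)\<^sup>2) / (2 * \<eta>) = 1 / (2 * \<eta>) * (norm u)\<^sup>2 + \<eta> / 2 * (norm e)\<^sup>2"
    using assms by (simp add: field_simps power2_eq_square)
  finally show ?thesis using assms by simp
qed

locale saga_ctx =
  fixes n :: nat and L :: real and fs :: "nat \<Rightarrow> 'a::euclidean_space \<Rightarrow> real" and gf :: "nat \<Rightarrow> 'a \<Rightarrow> 'a"
    and C :: "'a set" and h :: "'a \<Rightarrow> real" and xstar :: 'a
  assumes n_pos: "n \<ge> 1" and L_pos: "L > 0"
    and grad: "\<And>i x. i < n \<Longrightarrow> (fs i has_derivative (\<lambda>v. gf i x \<bullet> v)) (at x)"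
    and smooth: "\<And>i x y. i < n \<Longrightarrow> norm (gf i x - gf i y) \<le> L * norm (x - y)"
    and dom_nonempty: "C \<noteq> {}" and dom_closed: "closed C" and convC: "convex C" and hconv: "convex_on C h"
    and h_lsc: "lsc_ext C h" and xstar_dom: "xstar \<in> C"
    and xstar_min: "\<And>x. x \<in> C \<Longrightarrow>
           (1 / real n) * (\<Sum>i<n. fs i xstar) + h xstar \<le> (1 / real n) * (\<Sum>i<n. fs i x) + h x"
begin

definition f where "f x = (1 / real n) * (\<Sum>i<n. fs i x)"
definition \<eta> where "\<eta> = 1 / (5 * L * real n)"
abbreviation fg where "fg \<equiv> full_grad n gf"

lemma eta_pos: "\<eta> > 0" using L_pos n_pos by (simp add: \<eta>_def)
lemma inv2eta: "1 / (2 * \<eta>) = 5 * L * real n / 2" using L_pos n_pos by (simp add: \<eta>_def)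

lemma f_deriv: "(f has_derivative (\<lambda>v. fg x \<bullet> v)) (at x)"
proof -
  have "((\<lambda>x. \<Sum>i<n. fs i x) has_derivative (\<lambda>v. \<Sum>i<n. gf i x \<bullet> v)) (at x)"
    by (intro has_derivative_sum grad) simp
  hence "((\<lambda>x. (1 / real n) * (\<Sum>i<n. fs i x)) has_derivative (\<lambda>v. (1 / real n) * (\<Sum>i<n. gf i x \<bullet> v))) (at x)"
    by (rule has_derivative_mult_right)
  moreover have "(\<lambda>v. (1 / real n) * (\<Sum>i<n. gf i x \<bullet> v)) = (\<lambda>v. fg x \<bullet> v)"
    by (simp add: full_grad_def inner_sum_left fun_eq_iff)
  ultimately show ?thesis by (simp add: f_def[abs_def])
qed

lemma fg_lip: "norm (fg x - fg y) \<le> L * norm (x - y)"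
proof -
  have "fg x - fg y = (1 / real n) *\<^sub>R (\<Sum>i<n. gf i x - gf i y)"
    by (simp add: full_grad_def scaleR_diff_right sum_subtractf)
  hence "norm (fg x - fg y) = (1 / real n) * norm (\<Sum>i<n. gf i x - gf i y)" by simp
  also have "\<dots> \<le> (1 / real n) * (\<Sum>i<n. L * norm (x - y))"
    by (intro mult_left_mono sum_norm_le smooth) auto
  also have "\<dots> = L * norm (x - y)" using n_pos by simp
  finally show ?thesis .
qed

lemma f_quad: "f y - f x - fg x \<bullet> (y - x) \<le> L/2 * (norm (y - x))\<^sup>2"
  "-(f y - f x - fg x \<bullet> (y - x)) \<le> L/2 * (norm (y - x))\<^sup>2"
  using quad_upper_aux[of f fg L y x, OF f_deriv fg_lip] by auto

lemma h_low: "y \<in> C \<Longrightarrow> h y \<ge> h xstar - norm (fg xstar) * norm (y - xstar) - (L/2) * (norm (y - xstar))\<^sup>2"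
proof -
  assume y: "y \<in> C"
  have "f xstar + h xstar \<le> f y + h y" using xstar_min[OF y] by (simp add: f_def)
  moreover have "f y \<le> f xstar + fg xstar \<bullet> (y - xstar) + L/2 * (norm (y - xstar))\<^sup>2"
    using f_quad(1)[of y xstar] by simp
  moreover have "fg xstar \<bullet> (y - xstar) \<le> norm (fg xstar) * norm (y - xstar)"
    using Cauchy_Schwarz_ineq2[of "fg xstar" "y - xstar"] by simp
  ultimately show ?thesis by linarith
qed

lemma prox_ok: "prox C h \<eta> w \<in> C \<and> (\<forall>z\<in>C. h (prox C h \<eta> w) + (1/(2*\<eta>)) * (norm (prox C h \<eta> w - w))\<^sup>2
            + (1/(2*\<eta>)) * (norm (prox C h \<eta> w - z))\<^sup>2 \<le> h z + (1/(2*\<eta>)) * (norm (z - w))\<^sup>2)"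
proof (rule prox_main[OF dom_closed convC dom_nonempty hconv h_lsc eta_pos])
  show "\<And>y. y \<in> C \<Longrightarrow> h y \<ge> h xstar - norm (fg xstar) * norm (y - xstar) - (L/2) * (norm (y - xstar))\<^sup>2"
    by (rule h_low)
  show "L < 1 / (2 * \<eta>)" unfolding inv2eta using L_pos n_pos
  proof -
    have "L * 1 < L * (5 * real n / 2)" using L_pos n_pos by (intro mult_strict_left_mono) auto
    thus "L < 5 * L * real n / 2" by simp
  qed
qed simp

lemma basic_ineq:
  assumes z: "z \<in> C" and y: "y = prox C h \<eta> (x - \<eta> *\<^sub>R d)"
  shows "f y + h y \<le> f z + h z + (y - z) \<bullet> (fg x - d) + (L/2 - 1/(2*\<eta>)) * (norm (y - x))\<^sup>2
      + (L/2 + 1/(2*\<eta>)) * (norm (z - x))\<^sup>2 - (1/(2*\<eta>)) * (norm (y - z))\<^sup>2"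
proof -
  define a where "a = 1 / (2 * \<eta>)"
  define w where "w = x - \<eta> *\<^sub>R d"
  have tp: "h y + a * (norm (y - w))\<^sup>2 + a * (norm (y - z))\<^sup>2 \<le> h z + a * (norm (z - w))\<^sup>2"
    using prox_ok[of w] z unfolding y a_def w_def by blast
  have ex: "(norm (u - w))\<^sup>2 = (norm (u - x))\<^sup>2 + 2 * \<eta> * ((u - x) \<bullet> d) + \<eta>\<^sup>2 * (norm d)\<^sup>2" for u
  proof -
    have e: "u - w = (u - x) + \<eta> *\<^sub>R d" by (simp add: w_def)
    have "(norm (u - w))\<^sup>2 = (norm (u - x))\<^sup>2 + 2 * ((u - x) \<bullet> (\<eta> *\<^sub>R d)) + (norm (\<eta> *\<^sub>R d))\<^sup>2"
      unfolding e by (rule norm_add_sq)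
    also have "\<dots> = (norm (u - x))\<^sup>2 + 2 * \<eta> * ((u - x) \<bullet> d) + \<eta>\<^sup>2 * (norm d)\<^sup>2"
      by (simp add: power_mult_distrib mult.assoc)
    finally show ?thesis .
  qed
  have a2: "a * (2 * \<eta> * X) = X" for X using eta_pos by (simp add: a_def)
  have i1: "(y - x) \<bullet> d - (z - x) \<bullet> d = (y - z) \<bullet> d" by (simp add: inner_diff_left)
  have i2: "fg x \<bullet> (y - x) - fg x \<bullet> (z - x) = (y - z) \<bullet> fg x"
    unfolding inner_commute[of "fg x"] by (simp add: inner_diff_left)
  have i3: "(y - z) \<bullet> (fg x - d) = (y - z) \<bullet> fg x - (y - z) \<bullet> d" by (simp add: inner_diff_right)
  have q1: "f y \<le> f x + fg x \<bullet> (y - x) + L/2 * (norm (y - x))\<^sup>2" using f_quad(1)[of y x] by simp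
  have q2: "f x \<le> f z - fg x \<bullet> (z - x) + L/2 * (norm (z - x))\<^sup>2" using f_quad(2)[of z x] by simp
  have tp': "h y + a * (norm (y - x))\<^sup>2 + a * (2 * \<eta> * ((y - x) \<bullet> d)) + a * (\<eta>\<^sup>2 * (norm d)\<^sup>2) + a * (norm (y - z))\<^sup>2
      \<le> h z + a * (norm (z - x))\<^sup>2 + a * (2 * \<eta> * ((z - x) \<bullet> d)) + a * (\<eta>\<^sup>2 * (norm d)\<^sup>2)"
    using tp unfolding ex by (simp add: distrib_left)
  have "f y + h y \<le> f z + h z + ((y - z) \<bullet> fg x - (y - z) \<bullet> d) + (L/2 * (norm (y - x))\<^sup>2 - a * (norm (y - x))\<^sup>2)
      + (L/2 * (norm (z - x))\<^sup>2 + a * (norm (z - x))\<^sup>2) - a * (norm (y - z))\<^sup>2"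
    using tp' q1 q2 i1 i2 a2[of "(y - x) \<bullet> d"] a2[of "(z - x) \<bullet> d"] by linarith
  thus ?thesis unfolding a_def[symmetric] i3 by (simp add: algebra_simps)
qed

end


lemma sum_if_eq:
  assumes "k < n"
  shows "(\<Sum>j<n. if k = j then a else b) = a + (real n - 1) * (b::real)"
proof -
  have "(\<Sum>j<n. if k = j then a else b) = (\<Sum>j<n. b + (if k = j then a - b else 0))"
    by (intro sum.cong) auto
  also have "\<dots> = real n * b + (a - b)"
    using assms by (simp add: sum.distrib)
  finally show ?thesis by (simp add: algebra_simps)
qed

context saga_ctx begin

definition gbar where "gbar \<alpha> = (1 / real n) *\<^sub>R (\<Sum>i<n. gf i (\<alpha> i))"
definition vv where "vv x \<alpha> i = (gf i x - gf i (\<alpha> i)) + gbar \<alpha>"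
definition nx where "nx x \<alpha> i = prox C h \<eta> (x - \<eta> *\<^sub>R vv x \<alpha> i)"
definition S where "S x \<alpha> = (1 / real n) * (\<Sum>k<n. (norm (x - \<alpha> k))\<^sup>2)"
definition F where "F x = f x + h x"
definition \<Phi> where "\<Phi> s = F (fst s) + (L/5) * S (fst s) (snd s)"
definition upd where "upd x \<alpha> j = (\<lambda>k. if k = j then x else \<alpha> k)"
definition G where "G x = grad_map n gf C h \<eta> x"
definition \<gamma> where "\<gamma> = (5 * real n - 2) / (50 * L * (real n)\<^sup>2)"

lemma gamma_eq: "(L - 1/(2*\<eta>)) * \<eta>\<^sup>2 = - \<gamma>"
  using L_pos n_pos unfolding \<gamma>_def \<eta>_def by (simp add: field_simps power2_eq_square)

lemma gamma_pos: "\<gamma> > 0" using L_pos n_pos unfolding \<gamma>_def by (simp add: field_simps)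

lemma S_nonneg: "S x \<alpha> \<ge> 0" unfolding S_def by (simp add: sum_nonneg)

lemma step_i:
  assumes x: "x \<in> C"
  shows "F (nx x \<alpha> i) \<le> F x + \<eta>/2 * (norm (fg x - vv x \<alpha> i))\<^sup>2
     + (L/2 - 1/(2*\<eta>)) * (norm (nx x \<alpha> i - x))\<^sup>2 - \<gamma> * (norm (G x))\<^sup>2"
proof -
  define a where "a = 1 / (2 * \<eta>)"
  define y where "y = nx x \<alpha> i"
  define xb where "xb = prox C h \<eta> (x - \<eta> *\<^sub>R fg x)"
  define e where "e = fg x - vv x \<alpha> i"
  have xbC: "xb \<in> C" using prox_ok unfolding xb_def by blast
  have b1: "f y + h y \<le> f xb + h xb + (y - xb) \<bullet> e + (L/2 - a) * (norm (y - x))\<^sup>2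
      + (L/2 + a) * (norm (xb - x))\<^sup>2 - a * (norm (y - xb))\<^sup>2"
    using basic_ineq[OF xbC, of y x "vv x \<alpha> i"] unfolding a_def e_def y_def nx_def by simp
  have b2: "f xb + h xb \<le> f x + h x + (xb - x) \<bullet> (fg x - fg x) + (L/2 - a) * (norm (xb - x))\<^sup>2
      + (L/2 + a) * (norm (x - x))\<^sup>2 - a * (norm (xb - x))\<^sup>2"
    using basic_ineq[OF x, of xb x "fg x"] unfolding a_def xb_def by blast
  have z1: "(xb - x) \<bullet> (fg x - fg x) = 0" "(L/2 + a) * (norm (x - x))\<^sup>2 = 0" by simp_all
  have yg: "(y - xb) \<bullet> e \<le> a * (norm (y - xb))\<^sup>2 + \<eta> / 2 * (norm e)\<^sup>2"
    using young_inner[OF eta_pos, of "y - xb" e] unfolding a_def by simp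
  have comb: "(L/2 - a) * (norm (xb - x))\<^sup>2 - a * (norm (xb - x))\<^sup>2 + (L/2 + a) * (norm (xb - x))\<^sup>2
     = (L - a) * (norm (xb - x))\<^sup>2" by (simp add: algebra_simps)
  have Gx: "G x = (1 / \<eta>) *\<^sub>R (x - xb)" unfolding G_def grad_map_def xb_def by simp
  have "(norm (G x))\<^sup>2 = (1 / \<eta>)\<^sup>2 * (norm (xb - x))\<^sup>2"
    unfolding Gx using eta_pos by (simp add: power_mult_distrib norm_minus_commute power_divide)
  hence "(L - a) * (norm (xb - x))\<^sup>2 = (L - a) * \<eta>\<^sup>2 * (norm (G x))\<^sup>2"
    using eta_pos by (simp add: power_divide)
  hence gg: "(L - a) * (norm (xb - x))\<^sup>2 = - \<gamma> * (norm (G x))\<^sup>2"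
    using gamma_eq unfolding a_def by simp
  have "f y + h y \<le> f x + h x + \<eta> / 2 * (norm e)\<^sup>2 + (L/2 - a) * (norm (y - x))\<^sup>2
     + ((L/2 - a) * (norm (xb - x))\<^sup>2 - a * (norm (xb - x))\<^sup>2 + (L/2 + a) * (norm (xb - x))\<^sup>2)"
    using b1 b2 z1 yg by linarith
  thus ?thesis unfolding comb gg F_def y_def[symmetric] e_def[symmetric] a_def[symmetric] by simp
qed

lemma young_n:
  fixes y x w :: 'a
  shows "(norm (y - w))\<^sup>2 \<le> 2 * real n * (norm (y - x))\<^sup>2 + (2 * real n / (2 * real n - 1)) * (norm (x - w))\<^sup>2"
proof -
  define q where "q = 1 / (2 * real n - 1)"
  have q: "q > 0" using n_pos by (simp add: q_def)
  have iq: "1 / q = 2 * real n - 1" using n_pos by (simp add: q_def)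
  define A where "A = (norm (y - x))\<^sup>2"
  define V where "V = (norm (x - w))\<^sup>2"
  define I where "I = (y - x) \<bullet> (x - w)"
  have yw: "y - w = (y - x) + (x - w)" by simp
  have e1: "(norm (y - w))\<^sup>2 = A + 2 * I + V"
    unfolding yw A_def V_def I_def by (rule norm_add_sq)
  have e2: "I \<le> 1 / (2 * q) * A + q / 2 * V"
    unfolding I_def A_def V_def by (rule young_inner[OF q])
  have e3: "2 * (1 / (2 * q) * A + q / 2 * V) = (1 / q) * A + q * V" using q by (simp add: field_simps)
  have e4: "A + (2 * real n - 1) * A = 2 * real n * A" by (simp add: algebra_simps)
  have e5: "q * V + V = (1 + q) * V" by (simp add: algebra_simps)
  have e6: "1 + q = 2 * real n / (2 * real n - 1)" using n_pos by (simp add: q_def field_simps)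
  define P where "P = 1 / (2 * q) * A + q / 2 * V"
  define X where "X = (2 * real n - 1) * A"
  define Y where "Y = q * V"
  have e3': "2 * P = X + Y" using e3 unfolding iq P_def X_def Y_def .
  have "(norm (y - w))\<^sup>2 \<le> A + X + (Y + V)"
    using e1 e2[folded P_def] e3' by linarith
  hence "(norm (y - w))\<^sup>2 \<le> A + (2 * real n - 1) * A + (q * V + V)" unfolding X_def Y_def .
  hence "(norm (y - w))\<^sup>2 \<le> 2 * real n * A + (2 * real n / (2 * real n - 1)) * V" unfolding e4 e5 e6 .
  thus ?thesis unfolding A_def V_def .
qed

end


context saga_ctx begin

lemma S_avg:
  fixes y x :: 'a
  shows "(\<Sum>j<n. S y (upd x \<alpha> j)) / real n \<le> (2 * real n - 1) * (norm (y - x))\<^sup>2 + (1 - 1 / (2 * real n - 1)) * S x \<alpha>"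
proof -
  define N where "N = real n"
  have N1: "N \<ge> 1" using n_pos by (simp add: N_def)
  define A where "A = (norm (y - x))\<^sup>2"
  define T where "T = (\<Sum>k<n. (norm (x - \<alpha> k))\<^sup>2)"
  have A0: "A \<ge> 0" by (simp add: A_def)
  have T0: "T \<ge> 0" by (simp add: T_def sum_nonneg)
  have Sj: "S y (upd x \<alpha> j) = (1 / N) * (\<Sum>k<n. if k = j then A else (norm (y - \<alpha> k))\<^sup>2)" for j
    unfolding S_def upd_def A_def N_def by (intro arg_cong2[where f="(*)"] refl sum.cong) auto
  have SS: "(\<Sum>j<n. S y (upd x \<alpha> j)) = (1 / N) * (\<Sum>j<n. \<Sum>k<n. if k = j then A else (norm (y - \<alpha> k))\<^sup>2)"
    unfolding Sj by (simp add: sum_distrib_left)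
  have "(\<Sum>j<n. \<Sum>k<n. if k = j then A else (norm (y - \<alpha> k))\<^sup>2)
      = (\<Sum>k<n. \<Sum>j<n. if k = j then A else (norm (y - \<alpha> k))\<^sup>2)" by (rule sum.swap)
  also have "\<dots> = (\<Sum>k<n. A + (N - 1) * (norm (y - \<alpha> k))\<^sup>2)"
    unfolding N_def by (intro sum.cong refl sum_if_eq) simp
  also have "\<dots> \<le> (\<Sum>k<n. A + (N - 1) * (2 * N * A + (2 * N / (2 * N - 1)) * (norm (x - \<alpha> k))\<^sup>2))"
  proof (intro sum_mono add_left_mono mult_left_mono)
    fix k
    show "(norm (y - \<alpha> k))\<^sup>2 \<le> 2 * N * A + 2 * N / (2 * N - 1) * (norm (x - \<alpha> k))\<^sup>2"
      unfolding A_def N_def by (rule young_n)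
    show "0 \<le> N - 1" using N1 by simp
  qed
  also have "\<dots> = (\<Sum>k<n. (A + (N - 1) * (2 * N * A)) + ((N - 1) * (2 * N / (2 * N - 1))) * (norm (x - \<alpha> k))\<^sup>2)"
    by (intro sum.cong refl) (simp add: algebra_simps)
  also have "\<dots> = N * (A + (N - 1) * (2 * N * A)) + (N - 1) * (2 * N / (2 * N - 1)) * T"
    unfolding T_def N_def sum.distrib sum_distrib_left[symmetric] by (simp add: algebra_simps)
  finally have le0: "(\<Sum>j<n. \<Sum>k<n. if k = j then A else (norm (y - \<alpha> k))\<^sup>2) \<le> N * (A + (N - 1) * (2 * N * A)) + (N - 1) * (2 * N / (2 * N - 1)) * T" .
  have le: "(\<Sum>j<n. S y (upd x \<alpha> j)) \<le> (1/N) * (N * (A + (N - 1) * (2 * N * A)) + (N - 1) * (2 * N / (2 * N - 1)) * T)"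
    unfolding SS using N1 le0 by (intro mult_left_mono) auto
  have "(1/N) * (N * (A + (N - 1) * (2 * N * A)) + (N - 1) * (2 * N / (2 * N - 1)) * T) / N
      = A / N + (N - 1) * 2 * A + (1 - 1 / (2 * N - 1)) * (T / N)"
    using N1 by (simp add: field_simps)
  also have "\<dots> \<le> (2 * N - 1) * A + (1 - 1 / (2 * N - 1)) * (T / N)"
  proof -
    have "A / N \<le> A" using N1 A0 by (simp add: divide_le_eq mult_le_cancel_left1)
    thus ?thesis by (simp add: algebra_simps)
  qed
  finally have "(\<Sum>j<n. S y (upd x \<alpha> j)) / N \<le> (2 * N - 1) * A + (1 - 1 / (2 * N - 1)) * (T / N)"
    using le N1 by (smt (verit) divide_right_mono)
  moreover have "S x \<alpha> = T / N" unfolding S_def T_def N_def by simp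
  ultimately show ?thesis unfolding N_def A_def by simp
qed

lemma e_avg: "(\<Sum>i<n. (norm (fg x - vv x \<alpha> i))\<^sup>2) / real n \<le> L\<^sup>2 * S x \<alpha>"
proof -
  define N where "N = real n"
  have N1: "N \<ge> 1" using n_pos by (simp add: N_def)
  define u where "u i = gf i x - gf i (\<alpha> i)" for i
  define ub where "ub = (1 / N) *\<^sub>R (\<Sum>i<n. u i)"
  have ev: "fg x - vv x \<alpha> i = ub - u i" for i
    unfolding full_grad_def vv_def gbar_def ub_def u_def N_def
    by (simp add: sum_subtractf scaleR_diff_right algebra_simps)
  have su: "(\<Sum>i<n. u i) = N *\<^sub>R ub" using N1 by (simp add: ub_def)
  have "(\<Sum>i<n. (norm (ub - u i))\<^sup>2) = (\<Sum>i<n. (norm ub)\<^sup>2 + 2 * (ub \<bullet> (- u i)) + (norm (u i))\<^sup>2)"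
    by (intro sum.cong refl) (metis norm_add_sq norm_minus_cancel diff_conv_add_uminus)
  also have "\<dots> = N * (norm ub)\<^sup>2 - 2 * (ub \<bullet> (\<Sum>i<n. u i)) + (\<Sum>i<n. (norm (u i))\<^sup>2)"
    unfolding N_def by (simp add: sum.distrib inner_sum_right sum_subtractf sum_distrib_left)
  also have "\<dots> = (\<Sum>i<n. (norm (u i))\<^sup>2) - N * (norm ub)\<^sup>2"
    unfolding su by (simp add: power2_norm_eq_inner)
  also have "\<dots> \<le> (\<Sum>i<n. (norm (u i))\<^sup>2)" using N1 by simp
  also have "\<dots> \<le> (\<Sum>i<n. L\<^sup>2 * (norm (x - \<alpha> i))\<^sup>2)"
  proof (intro sum_mono)
    fix i assume "i \<in> {..<n}"
    hence "norm (u i) \<le> L * norm (x - \<alpha> i)" unfolding u_def by (intro smooth) auto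
    hence "(norm (u i))\<^sup>2 \<le> (L * norm (x - \<alpha> i))\<^sup>2" by (intro power_mono) auto
    thus "(norm (u i))\<^sup>2 \<le> L\<^sup>2 * (norm (x - \<alpha> i))\<^sup>2" by (simp add: power_mult_distrib)
  qed
  finally have "(\<Sum>i<n. (norm (fg x - vv x \<alpha> i))\<^sup>2) \<le> L\<^sup>2 * (\<Sum>i<n. (norm (x - \<alpha> i))\<^sup>2)"
    unfolding ev by (simp add: sum_distrib_left)
  hence "(\<Sum>i<n. (norm (fg x - vv x \<alpha> i))\<^sup>2) / N \<le> L\<^sup>2 * (\<Sum>i<n. (norm (x - \<alpha> i))\<^sup>2) / N"
    using N1 by (intro divide_right_mono) auto
  thus ?thesis unfolding S_def N_def by simp
qed

end


context saga_ctx begin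

lemma coefA: "(L/2 - 1/(2*\<eta>)) + L/5 * (2 * real n - 1) \<le> 0"
proof -
  define N where "N = real n"
  have N1: "N \<ge> 1" using n_pos by (simp add: N_def)
  have e: "L/2 - 5 * L * N / 2 + L/5 * (2 * N - 1) = 3/10 * L - 21/10 * (L * N)" by (simp add: algebra_simps)
  have "L * 1 \<le> L * N" using N1 L_pos by (intro mult_left_mono) auto
  thus ?thesis using e L_pos unfolding inv2eta N_def[symmetric] by linarith
qed

lemma coefS: "\<eta>/2 * L\<^sup>2 + L/5 * (1 - 1 / (2 * real n - 1)) \<le> L/5"
proof -
  define N where "N = real n"
  have N1: "N \<ge> 1" using n_pos by (simp add: N_def)
  have e1: "\<eta>/2 * L\<^sup>2 = L / (10 * N)" using L_pos N1 unfolding \<eta>_def N_def[symmetric]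
    by (simp add: power2_eq_square field_simps)
  have e2: "L/5 * (1 - 1 / (2 * N - 1)) = L/5 - L / (5 * (2 * N - 1))" using N1 by (simp add: field_simps)
  have "L / (10 * N) \<le> L / (5 * (2 * N - 1))" using N1 L_pos by (intro divide_left_mono) auto
  thus ?thesis unfolding N_def[symmetric] e1 e2 by simp
qed

lemma step_avg:
  assumes x: "x \<in> C"
  shows "(\<Sum>i<n. (\<Sum>j<n. \<Phi> (nx x \<alpha> i, upd x \<alpha> j)) / real n) / real n \<le> \<Phi> (x, \<alpha>) - \<gamma> * (norm (G x))\<^sup>2"
proof -
  define N where "N = real n"
  have N1: "N \<ge> 1" using n_pos by (simp add: N_def)
  define S0 where "S0 = S x \<alpha>"
  define c2 where "c2 = L/5 * (1 - 1 / (2 * N - 1))"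
  define Gn where "Gn = (norm (G x))\<^sup>2"
  define E where "E i = (norm (fg x - vv x \<alpha> i))\<^sup>2" for i
  have S00: "S0 \<ge> 0" unfolding S0_def by (rule S_nonneg)
  have pi: "(\<Sum>j<n. \<Phi> (nx x \<alpha> i, upd x \<alpha> j)) / N \<le> F x + \<eta>/2 * E i - \<gamma> * Gn + c2 * S0" for i
  proof -
    define y where "y = nx x \<alpha> i"
    define A where "A = (norm (y - x))\<^sup>2"
    define Sav where "Sav = (\<Sum>j<n. S y (upd x \<alpha> j)) / N"
    have A0: "A \<ge> 0" by (simp add: A_def)
    have eq: "(\<Sum>j<n. \<Phi> (nx x \<alpha> i, upd x \<alpha> j)) / N = F y + L/5 * Sav"
    proof -
      have "(\<Sum>j<n. \<Phi> (nx x \<alpha> i, upd x \<alpha> j)) = (\<Sum>j<n. F y + L/5 * S y (upd x \<alpha> j))"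
        unfolding \<Phi>_def y_def by simp
      also have "\<dots> = N * F y + L/5 * (\<Sum>j<n. S y (upd x \<alpha> j))"
        unfolding N_def sum.distrib sum_distrib_left by simp
      finally show ?thesis using N1 unfolding Sav_def by (simp add: field_simps)
    qed
    have h1: "F y \<le> F x + \<eta>/2 * E i + (L/2 - 1/(2*\<eta>)) * A - \<gamma> * Gn"
      using step_i[OF x, of \<alpha> i] unfolding y_def A_def E_def Gn_def by linarith
    have sa: "Sav \<le> (2 * N - 1) * A + (1 - 1 / (2 * N - 1)) * S0"
      using S_avg[of y x \<alpha>] unfolding Sav_def A_def S0_def N_def .
    have "L/5 * Sav \<le> L/5 * ((2 * N - 1) * A + (1 - 1 / (2 * N - 1)) * S0)"
      using sa L_pos by (intro mult_left_mono) auto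
    hence h2: "L/5 * Sav \<le> L/5 * ((2 * N - 1) * A) + c2 * S0"
      unfolding c2_def by (simp add: algebra_simps)
    have "((L/2 - 1/(2*\<eta>)) + L/5 * (2 * N - 1)) * A \<le> 0"
      using coefA A0 unfolding N_def by (simp add: mult_nonpos_nonneg)
    hence h3: "(L/2 - 1/(2*\<eta>)) * A + L/5 * ((2 * N - 1) * A) \<le> 0" by (simp add: algebra_simps)
    show ?thesis unfolding eq using h1 h2 h3 by linarith
  qed
  have "(\<Sum>i<n. (\<Sum>j<n. \<Phi> (nx x \<alpha> i, upd x \<alpha> j)) / N) \<le> (\<Sum>i<n. F x + \<eta>/2 * E i - \<gamma> * Gn + c2 * S0)"
    by (intro sum_mono pi)
  also have "\<dots> = (\<Sum>i<n. (F x - \<gamma> * Gn + c2 * S0) + \<eta>/2 * E i)"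
    by (intro sum.cong refl) (simp add: algebra_simps)
  also have "\<dots> = N * (F x - \<gamma> * Gn + c2 * S0) + \<eta>/2 * (\<Sum>i<n. E i)"
    unfolding N_def sum.distrib sum_distrib_left[symmetric] by (simp add: algebra_simps)
  finally have s1: "(\<Sum>i<n. (\<Sum>j<n. \<Phi> (nx x \<alpha> i, upd x \<alpha> j)) / N) / N
      \<le> (N * (F x - \<gamma> * Gn + c2 * S0) + \<eta>/2 * (\<Sum>i<n. E i)) / N"
    using N1 by (intro divide_right_mono) auto
  have s2: "(N * (F x - \<gamma> * Gn + c2 * S0) + \<eta>/2 * (\<Sum>i<n. E i)) / N
      = F x - \<gamma> * Gn + c2 * S0 + \<eta>/2 * ((\<Sum>i<n. E i) / N)"
    using N1 by (simp add: field_simps)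
  have ea: "(\<Sum>i<n. E i) / N \<le> L\<^sup>2 * S0" using e_avg[of x \<alpha>] unfolding E_def N_def S0_def .
  have "\<eta>/2 * ((\<Sum>i<n. E i) / N) \<le> \<eta>/2 * (L\<^sup>2 * S0)" using ea eta_pos by (intro mult_left_mono) auto
  moreover have "(\<eta>/2 * L\<^sup>2 + c2) * S0 \<le> L/5 * S0"
    using coefS S00 unfolding c2_def N_def by (intro mult_right_mono) auto
  moreover have "\<Phi> (x, \<alpha>) = F x + L/5 * S0" by (simp add: \<Phi>_def S0_def)
  ultimately show ?thesis using s1 s2 unfolding N_def[symmetric] Gn_def[symmetric]
    by (simp add: algebra_simps)
qed

end


lemma exp_pair_fin:
  fixes f :: "'a \<times> 'b \<Rightarrow> real"
  assumes A: "finite (set_pmf A)" and B: "finite (set_pmf B)"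
  shows "measure_pmf.expectation (pair_pmf A B) f =
         measure_pmf.expectation B (\<lambda>b. measure_pmf.expectation A (\<lambda>a. f (a, b)))"
proof -
  have "measure_pmf.expectation (pair_pmf A B) f = (\<Sum>p\<in>set_pmf A \<times> set_pmf B. f p * pmf (pair_pmf A B) p)"
    using A B by (intro integral_measure_pmf_real) auto
  also have "\<dots> = (\<Sum>(a, b)\<in>set_pmf A \<times> set_pmf B. f (a, b) * (pmf A a * pmf B b))"
    by (intro sum.cong refl) (auto simp: pmf_pair)
  also have "\<dots> = (\<Sum>a\<in>set_pmf A. \<Sum>b\<in>set_pmf B. f (a, b) * (pmf A a * pmf B b))"
    by (rule sum.cartesian_product[symmetric])
  also have "\<dots> = (\<Sum>b\<in>set_pmf B. \<Sum>a\<in>set_pmf A. f (a, b) * (pmf A a * pmf B b))"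
    by (rule sum.swap)
  also have "\<dots> = (\<Sum>b\<in>set_pmf B. (\<Sum>a\<in>set_pmf A. f (a, b) * pmf A a) * pmf B b)"
    by (simp add: sum_distrib_right mult.assoc)
  also have "\<dots> = (\<Sum>b\<in>set_pmf B. measure_pmf.expectation A (\<lambda>a. f (a, b)) * pmf B b)"
    using A by (intro sum.cong refl arg_cong2[where f="(*)"] integral_measure_pmf_real[symmetric]) auto
  also have "\<dots> = measure_pmf.expectation B (\<lambda>b. measure_pmf.expectation A (\<lambda>a. f (a, b)))"
    using B by (intro integral_measure_pmf_real[symmetric]) auto
  finally show ?thesis .
qed

lemma exp_mono_fin:
  fixes f g :: "'a \<Rightarrow> real"
  assumes "finite (set_pmf M)" "\<And>x. x \<in> set_pmf M \<Longrightarrow> f x \<le> g x"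
  shows "measure_pmf.expectation M f \<le> measure_pmf.expectation M g"
  using assms by (intro integral_mono_AE) (auto simp: integrable_measure_pmf_finite AE_measure_pmf_iff)

context saga_ctx begin

definition stp :: "'a \<times> (nat \<Rightarrow> 'a) \<Rightarrow> (nat \<Rightarrow> nat) \<times> (nat \<Rightarrow> nat) \<Rightarrow> 'a \<times> (nat \<Rightarrow> 'a)" where
  "stp s d = (let (x, \<alpha>) = s;
          (I, J) = d;
          g = (1 / real n) *\<^sub>R (\<Sum>i<n. gf i (\<alpha> i));
          v = (1 / real (1::nat)) *\<^sub>R (\<Sum>k<(1::nat). gf (I k) x - gf (I k) (\<alpha> (I k))) + g
      in (prox C h \<eta> (x - \<eta> *\<^sub>R v), (\<lambda>j. if j \<in> J ` {..<(1::nat)} then x else \<alpha> j)))"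

abbreviation st where "st x0 ds t \<equiv> saga_state n gf C h \<eta> 1 x0 ds t"

lemma st_Suc: "st x0 ds (Suc t) = stp (st x0 ds t) (ds t)"
  by (simp only: saga_state.simps stp_def)

lemma st_dep:
  fixes t :: nat
  shows "(\<forall>k<t. ds k = ds' k) \<Longrightarrow> st x0 ds t = st x0 ds' t"
proof (induction t)
  case 0 thus ?case by simp
next
  case (Suc t) thus ?case by (simp only: st_Suc) auto
qed

lemma stp_eval: "stp (x, \<alpha>) (I, J) = (nx x \<alpha> (I 0), upd x \<alpha> (J 0))"
  by (simp add: stp_def nx_def vv_def gbar_def upd_def lessThan_Suc)

lemma stp_C: "fst (stp s d) \<in> C"
  using prox_ok by (cases s; cases d) (auto simp: stp_eval nx_def)

definition P where "P = Pi_pmf {..<(1::nat)} (0::nat) (\<lambda>_. pmf_of_set {..<n})"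
definition Dp where "Dp = pair_pmf P P"
definition Qd where "Qd (t::nat) = Pi_pmf {..<t} (\<lambda>_. 0::nat, \<lambda>_. 0::nat) (\<lambda>_. Dp)"
definition Q where "Q x0 (t::nat) = map_pmf (\<lambda>ds. st x0 ds t) (Qd t)"

definition ev where "ev (i::nat) = (\<lambda>b::nat. if b = 0 then i else 0)"

lemma P_eq: "P = map_pmf ev (pmf_of_set {..<n})"
proof -
  have "{..<(1::nat)} = {0}" by auto
  thus ?thesis unfolding P_def ev_def by (simp add: Pi_pmf_singleton)
qed

lemma nonempty_n: "{..<n} \<noteq> {}" using n_pos by (simp add: lessThan_empty_iff)

lemma fin_P: "finite (set_pmf P)"
  unfolding P_eq using nonempty_n by simp

lemma fin_Dp: "finite (set_pmf Dp)" unfolding Dp_def using fin_P by simp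

lemma Qd_Suc: "Qd (Suc t) = map_pmf (\<lambda>(y, f). f(t := y)) (pair_pmf Dp (Qd t))"
  unfolding Qd_def lessThan_Suc by (rule Pi_pmf_insert) auto

lemma fin_Qd: "finite (set_pmf (Qd t))"
proof (induction t)
  case 0 thus ?case by (simp add: Qd_def)
next
  case (Suc t) thus ?case unfolding Qd_Suc using fin_Dp by simp
qed

lemma fin_Q: "finite (set_pmf (Q x0 t))" unfolding Q_def set_map_pmf by (intro finite_imageI fin_Qd)

lemma Q_0: "Q x0 0 = return_pmf (x0, \<lambda>_. x0)" by (simp add: Q_def Qd_def)

lemma Q_Suc: "Q x0 (Suc t) = map_pmf (\<lambda>(d, s). stp s d) (pair_pmf Dp (Q x0 t))"
proof -
  have "Q x0 (Suc t) = map_pmf (\<lambda>(y, f). st x0 (f(t := y)) (Suc t)) (pair_pmf Dp (Qd t))"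
    unfolding Q_def Qd_Suc by (simp add: pmf.map_comp o_def case_prod_unfold del: saga_state.simps)
  also have "\<dots> = map_pmf (\<lambda>(y, f). stp (st x0 f t) y) (pair_pmf Dp (Qd t))"
  proof (intro pmf.map_cong refl)
    fix p assume "p \<in> set_pmf (pair_pmf Dp (Qd t))"
    obtain y f where p: "p = (y, f)" by (cases p)
    have e1: "st x0 (f(t := y)) t = st x0 f t" by (intro st_dep) auto
    have e2: "st x0 (f(t := y)) (Suc t) = stp (st x0 f t) y"
      unfolding st_Suc e1 fun_upd_same by (rule refl)
    show "(\<lambda>(y, f). st x0 (f(t := y)) (Suc t)) p = (\<lambda>(y, f). stp (st x0 f t) y) p"
      unfolding p prod.case by (rule e2)
  qed
  also have "\<dots> = map_pmf (\<lambda>(d, s). stp s d) (pair_pmf Dp (Q x0 t))"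
    unfolding Q_def pair_map_pmf2 by (simp add: pmf.map_comp o_def case_prod_unfold del: saga_state.simps)
  finally show ?thesis .
qed

lemma exp_Dp:
  fixes \<psi> :: "nat \<Rightarrow> nat \<Rightarrow> real"
  shows "measure_pmf.expectation Dp (\<lambda>d. \<psi> (fst d 0) (snd d 0)) = (\<Sum>i<n. (\<Sum>j<n. \<psi> i j) / real n) / real n"
proof -
  define U where "U = pmf_of_set {..<n}"
  have finU: "finite (set_pmf U)" using nonempty_n by (simp add: U_def)
  have "Dp = map_pmf (\<lambda>(a, b). (ev a, ev b)) (pair_pmf U U)"
    unfolding Dp_def P_eq U_def by (simp add: map_pair)
  hence "measure_pmf.expectation Dp (\<lambda>d. \<psi> (fst d 0) (snd d 0))
      = measure_pmf.expectation (pair_pmf U U) (\<lambda>p. \<psi> (fst p) (snd p))"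
    by (simp add: case_prod_unfold ev_def)
  also have "\<dots> = measure_pmf.expectation U (\<lambda>b. measure_pmf.expectation U (\<lambda>a. \<psi> a b))"
    using finU by (simp add: exp_pair_fin)
  also have "\<dots> = (\<Sum>b<n. \<Sum>a<n. \<psi> a b) / (real n * real n)"
    using nonempty_n by (simp add: U_def integral_pmf_of_set)
  also have "\<dots> = (\<Sum>a<n. \<Sum>b<n. \<psi> a b) / (real n * real n)"
    by (subst sum.swap) (rule refl)
  also have "\<dots> = (\<Sum>i<n. (\<Sum>j<n. \<psi> i j) / real n) / real n"
    by (simp add: sum_divide_distrib[symmetric] divide_divide_eq_left)
  finally show ?thesis .
qed

end


context saga_ctx begin

lemma Phi_ge: "fst s \<in> C \<Longrightarrow> \<Phi> s \<ge> F xstar"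
proof -
  assume "fst s \<in> C"
  hence "F xstar \<le> F (fst s)" using xstar_min by (simp add: F_def f_def)
  moreover have "(L/5) * S (fst s) (snd s) \<ge> 0" using L_pos S_nonneg[of "fst s" "snd s"] by simp
  ultimately show ?thesis by (simp add: \<Phi>_def)
qed

lemma exp_step:
  assumes "fst s \<in> C"
  shows "measure_pmf.expectation Dp (\<lambda>d. \<Phi> (stp s d)) \<le> \<Phi> s - \<gamma> * (norm (G (fst s)))\<^sup>2"
proof -
  obtain x \<alpha> where s: "s = (x, \<alpha>)" by (cases s)
  have x: "x \<in> C" using assms s by simp
  have "(\<lambda>d. \<Phi> (stp s d)) = (\<lambda>d. (\<lambda>i j. \<Phi> (nx x \<alpha> i, upd x \<alpha> j)) (fst d 0) (snd d 0))"
  proof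
    fix d :: "(nat \<Rightarrow> nat) \<times> (nat \<Rightarrow> nat)"
    obtain I J where d: "d = (I, J)" by (cases d)
    show "\<Phi> (stp s d) = (\<lambda>i j. \<Phi> (nx x \<alpha> i, upd x \<alpha> j)) (fst d 0) (snd d 0)"
      unfolding s d stp_eval by simp
  qed
  hence "measure_pmf.expectation Dp (\<lambda>d. \<Phi> (stp s d)) = (\<Sum>i<n. (\<Sum>j<n. \<Phi> (nx x \<alpha> i, upd x \<alpha> j)) / real n) / real n"
    using exp_Dp[of "\<lambda>i j. \<Phi> (nx x \<alpha> i, upd x \<alpha> j)"] by simp
  also have "\<dots> \<le> \<Phi> (x, \<alpha>) - \<gamma> * (norm (G x))\<^sup>2" by (rule step_avg[OF x])
  finally show ?thesis unfolding s by simp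
qed

lemma main_ind:
  assumes x0: "x0 \<in> C"
  shows "(\<forall>s\<in>set_pmf (Q x0 t). fst s \<in> C) \<and>
    measure_pmf.expectation (Q x0 t) \<Phi> + \<gamma> * (\<Sum>k<t. measure_pmf.expectation (Q x0 k) (\<lambda>s. (norm (G (fst s)))\<^sup>2)) \<le> F x0"
proof (induction t)
  case 0
  have "S x0 (\<lambda>_. x0) = 0" by (simp add: S_def)
  thus ?case using x0 by (simp add: Q_0 \<Phi>_def)
next
  case (Suc t)
  define gn where "gn s = (norm (G (fst s)))\<^sup>2" for s :: "'a \<times> (nat \<Rightarrow> 'a)"
  have supp: "\<forall>s\<in>set_pmf (Q x0 t). fst s \<in> C" using Suc.IH by blast
  have supp': "\<forall>s\<in>set_pmf (Q x0 (Suc t)). fst s \<in> C"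
    unfolding Q_Suc using stp_C by auto
  have "measure_pmf.expectation (Q x0 (Suc t)) \<Phi>
      = measure_pmf.expectation (pair_pmf Dp (Q x0 t)) (\<lambda>p. \<Phi> (stp (snd p) (fst p)))"
    unfolding Q_Suc by (simp add: case_prod_unfold)
  also have "\<dots> = measure_pmf.expectation (Q x0 t) (\<lambda>s. measure_pmf.expectation Dp (\<lambda>d. \<Phi> (stp s d)))"
    using exp_pair_fin[OF fin_Dp fin_Q, where f = "\<lambda>p. \<Phi> (stp (snd p) (fst p))"] by simp
  also have "\<dots> \<le> measure_pmf.expectation (Q x0 t) (\<lambda>s. \<Phi> s - \<gamma> * gn s)"
    using supp exp_step unfolding gn_def by (intro exp_mono_fin fin_Q) auto
  also have "\<dots> = measure_pmf.expectation (Q x0 t) \<Phi> - \<gamma> * measure_pmf.expectation (Q x0 t) gn"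
    using fin_Q[of x0 t] by (simp add: integrable_measure_pmf_finite)
  finally have "measure_pmf.expectation (Q x0 (Suc t)) \<Phi>
     \<le> measure_pmf.expectation (Q x0 t) \<Phi> - \<gamma> * measure_pmf.expectation (Q x0 t) gn" .
  moreover have "(\<Sum>k<Suc t. measure_pmf.expectation (Q x0 k) gn)
     = (\<Sum>k<t. measure_pmf.expectation (Q x0 k) gn) + measure_pmf.expectation (Q x0 t) gn" by simp
  moreover have "measure_pmf.expectation (Q x0 t) \<Phi> + \<gamma> * (\<Sum>k<t. measure_pmf.expectation (Q x0 k) gn) \<le> F x0"
    using Suc.IH unfolding gn_def by blast
  ultimately have "measure_pmf.expectation (Q x0 (Suc t)) \<Phi> + \<gamma> * (\<Sum>k<Suc t. measure_pmf.expectation (Q x0 k) gn) \<le> F x0"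
    by (simp add: algebra_simps)
  thus ?case using supp' unfolding gn_def by blast
qed

lemma Q_restr:
  assumes "a \<le> T"
  shows "map_pmf (\<lambda>ds. st x0 ds a) (Qd T) = Q x0 a"
proof -
  have "Qd a = map_pmf (\<lambda>f x. if x \<in> {..<a} then f x else (\<lambda>_. 0::nat, \<lambda>_. 0::nat)) (Qd T)"
    unfolding Qd_def using assms by (intro Pi_pmf_subset) auto
  hence "Q x0 a = map_pmf (\<lambda>ds. st x0 ds a) (map_pmf (\<lambda>f x. if x \<in> {..<a} then f x else (\<lambda>_. 0::nat, \<lambda>_. 0::nat)) (Qd T))"
    unfolding Q_def by simp
  also have "\<dots> = map_pmf (\<lambda>ds. st x0 ds a) (Qd T)"
    unfolding pmf.map_comp o_def by (intro pmf.map_cong refl st_dep) auto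
  finally show ?thesis ..
qed

lemma final:
  assumes x0: "x0 \<in> C" and T: "T \<ge> 1"
  shows "saga_expected_gm n gf C h x0 T 1 \<eta> \<le> (50 * L * (real n)\<^sup>2 / (5 * real n - 2)) * (F x0 - F xstar) / real T"
proof -
  define gn where "gn s = (norm (G (fst s)))\<^sup>2" for s :: "'a \<times> (nat \<Rightarrow> 'a)"
  have draws: "saga_draws n 1 T = Qd T" by (simp add: saga_draws_def Qd_def Dp_def P_def)
  have UT: "{..<T} \<noteq> {}" using T by (simp add: lessThan_empty_iff)
  have "saga_expected_gm n gf C h x0 T 1 \<eta>
      = measure_pmf.expectation (pair_pmf (Qd T) (pmf_of_set {..<T})) (\<lambda>p. gn (st x0 (fst p) (snd p)))"
    unfolding saga_expected_gm_def draws gn_def G_def by (simp add: case_prod_unfold)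
  also have "\<dots> = measure_pmf.expectation (pmf_of_set {..<T}) (\<lambda>a. measure_pmf.expectation (Qd T) (\<lambda>ds. gn (st x0 ds a)))"
    using exp_pair_fin[OF fin_Qd, where B = "pmf_of_set {..<T}" and f = "\<lambda>p. gn (st x0 (fst p) (snd p))"] UT by simp
  also have "\<dots> = (\<Sum>a<T. measure_pmf.expectation (Qd T) (\<lambda>ds. gn (st x0 ds a))) / real T"
    using UT by (simp add: integral_pmf_of_set)
  also have "(\<Sum>a<T. measure_pmf.expectation (Qd T) (\<lambda>ds. gn (st x0 ds a))) = (\<Sum>a<T. measure_pmf.expectation (Q x0 a) gn)"
  proof (intro sum.cong refl)
    fix a assume "a \<in> {..<T}"
    hence "map_pmf (\<lambda>ds. st x0 ds a) (Qd T) = Q x0 a" by (intro Q_restr) auto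
    thus "measure_pmf.expectation (Qd T) (\<lambda>ds. gn (st x0 ds a)) = measure_pmf.expectation (Q x0 a) gn"
      by (metis integral_map_pmf)
  qed
  finally have eq: "saga_expected_gm n gf C h x0 T 1 \<eta> = (\<Sum>a<T. measure_pmf.expectation (Q x0 a) gn) / real T" .
  have mi: "(\<forall>s\<in>set_pmf (Q x0 T). fst s \<in> C) \<and>
    measure_pmf.expectation (Q x0 T) \<Phi> + \<gamma> * (\<Sum>k<T. measure_pmf.expectation (Q x0 k) gn) \<le> F x0"
    using main_ind[OF x0, of T] unfolding gn_def .
  have "measure_pmf.expectation (Q x0 T) (\<lambda>_. F xstar) \<le> measure_pmf.expectation (Q x0 T) \<Phi>"
    using mi Phi_ge by (intro exp_mono_fin fin_Q) auto
  hence lowE: "F xstar \<le> measure_pmf.expectation (Q x0 T) \<Phi>" by simp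
  have "\<gamma> * (\<Sum>k<T. measure_pmf.expectation (Q x0 k) gn) \<le> F x0 - F xstar" using mi lowE by linarith
  hence "(\<Sum>k<T. measure_pmf.expectation (Q x0 k) gn) \<le> (F x0 - F xstar) / \<gamma>"
    using gamma_pos by (simp add: field_simps)
  also have "(F x0 - F xstar) / \<gamma> = (50 * L * (real n)\<^sup>2 / (5 * real n - 2)) * (F x0 - F xstar)"
    using gamma_pos unfolding \<gamma>_def by (simp add: field_simps)
  finally have "(\<Sum>k<T. measure_pmf.expectation (Q x0 k) gn) / real T
      \<le> (50 * L * (real n)\<^sup>2 / (5 * real n - 2)) * (F x0 - F xstar) / real T"
    using T by (intro divide_right_mono) auto
  thus ?thesis unfolding eq .
qed

end


theorem theorem3:
  fixes n :: nat and L :: real and T :: nat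
    and fs :: "nat \<Rightarrow> 'a::euclidean_space \<Rightarrow> real" and gf :: "nat \<Rightarrow> 'a \<Rightarrow> 'a"
    and C :: "'a set" and h :: "'a \<Rightarrow> real" and x0 xstar :: 'a
  assumes n_pos: "n \<ge> 1"
    and L_pos: "L > 0"
    and grad: "\<And>i x. i < n \<Longrightarrow> (fs i has_derivative (\<lambda>v. gf i x \<bullet> v)) (at x)"
    and smooth: "\<And>i x y. i < n \<Longrightarrow> norm (gf i x - gf i y) \<le> L * norm (x - y)"
    and dom_nonempty: "C \<noteq> {}"
    and dom_closed: "closed C"
    and h_convex: "convex C" "convex_on C h"
    and h_lsc: "lsc_ext C h"
    and xstar_dom: "xstar \<in> C"
    and xstar_min: "\<And>x. x \<in> C \<Longrightarrow>
           (1 / real n) * (\<Sum>i<n. fs i xstar) + h xstar \<le> (1 / real n) * (\<Sum>i<n. fs i x) + h x"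
    and T_pos: "T \<ge> 1"
  shows "x0 \<in> C \<longrightarrow>
    saga_expected_gm n gf C h x0 T 1 (1 / (5 * L * real n))
      \<le> (50 * L * (real n)\<^sup>2 / (5 * real n - 2)) *
         (((1 / real n) * (\<Sum>i<n. fs i x0) + h x0) - ((1 / real n) * (\<Sum>i<n. fs i xstar) + h xstar)) / real T"
proof
  assume x0: "x0 \<in> C"
  interpret saga_ctx n L fs gf C h xstar
    by unfold_locales (use n_pos L_pos grad smooth dom_nonempty dom_closed h_convex h_lsc xstar_dom xstar_min in auto)
  show "saga_expected_gm n gf C h x0 T 1 (1 / (5 * L * real n))
      \<le> (50 * L * (real n)\<^sup>2 / (5 * real n - 2)) *
         (((1 / real n) * (\<Sum>i<n. fs i x0) + h x0) - ((1 / real n) * (\<Sum>i<n. fs i xstar) + h xstar)) / real T"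
    using final[OF x0 T_pos] unfolding \<eta>_def F_def f_def .
qed

end
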